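(* Let $(I,=_I,\neq_I;K)$ be a completely separated set and $\boldsymbol S=(\lambda_0,\lambda_1;\phi_0,\phi_1)$ a family of completely separated sets over it, with $\phi_0(i)=F_i$. Let $\bigotimes_{i\in I}F_i:=\{f_i\circ\mathrm{pr}_i\mid i\in I,\ f_i\in F_i\}$, where $\mathrm{pr}_i(\Theta):=\Theta_i$. Then $$\Big(\prod_{i\in I}\lambda_0(i),\ =_{\prod},\ \neq_{\prod};\ \bigotimes_{i\in I}F_i\Big)$$ is a completely separated set; in particular $\Theta\neq_{\prod}\Theta'\Leftrightarrow\Theta\neq_{(\prod_{i\in I}\lambda_0(i),\bigotimes_{i\in I}F_i)}\Theta'$.
   Context: Setting: constructive (Bishop-style) mathematics with intuitionistic logic. Sets carry an equality; functions respect equalities; $\mathbb F(X)$ = functions $X\to\mathbb R$ with pointwise equality; an extensional subset of $\mathbb F(X)$ is $\{f\mid P(f)\}$ with $P$ respecting $=_{\mathbb F(X)}$. $a\neq_{\mathbb R}b:\Leftrightarrow|a-b|>0$. An inequality $\neq_X$ satisfies $x=_Xy\ \&\ x\neq_Xy\Rightarrow\bot$. Strongly extensional: $f(x)\neq f(y)\Rightarrow x\neq y$. Induced relations: $x=_{(X,F)}x':\Leftrightarrow\forall_{f\in F}f(x)=f(x')$, $x\neq_{(X,F)}x':\Leftrightarrow\exists_{f\in F}f(x)\neq_{\mathbb R}f(x')$. A completely separated set $(X,=_X,\neq_X;F)$: $F$ extensional subset of $\mathbb F(X)$, $\neq_X\Leftrightarrow\neq_{(X,F)}$ and $x=_{(X,F)}x'\Rightarrow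 x=_Xx'$. Family of sets with an inequality over $(I,=_I,\neq_I)$: $i\mapsto(\lambda_0(i),=_{\lambda_0(i)},\neq_{\lambda_0(i)})$ and strongly extensional $\lambda_{ij}:\lambda_0(i)\to\lambda_0(j)$ for $i=_Ij$, with $\lambda_{ii}=\mathrm{id}$ and $\lambda_{jk}\circ\lambda_{ij}=\lambda_{ik}$ whenever $i=_Ij=_Ik$. Family of completely separated sets over completely separated $(I,=_I,\neq_I;K)$: additionally extensional $F_i\subseteq\mathbb F(\lambda_0(i))$ and functions $\phi_{ij}:F_i\to F_j$ ($i=_Ij$) with (a) $\neq_{\lambda_0(i)}\Leftrightarrow\neq_{(\lambda_0(i),F_i)}$, (b) $x=_{(\lambda_0(i),F_i)}x'\Rightarrow x=_{\lambda_0(i)}x'$, (c) $\phi_{ij}(f)=f\circ\lambda_{ji}$ for $f\in F_i$, $i=_Ij$. Pi-set $\prod_{i\in I}\lambda_0(i)$: dependent assignments $\Theta$ with $\Theta_i\in\lambda_0(i)$ for every $i$ and $\Theta_j=_{\lambda_0(j)}\lambda_{ij}(\Theta_i)$ whenever $i=_Ij$; $\Theta=_{\prod}\Theta':\Leftrightarrow\forall_i\Theta_i=_{\lambda_0(i)}\Theta'_i$; $\Theta\neq_{\prod}\Theta':\Leftrightarrow\exists_i\Theta_i\neq_{\lambda_0(i)}\Theta'_i$. *)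

theory Defs
  imports Main "HOL.Real"
begin

definition set_with_ineq :: "'a set \<Rightarrow> ('a \<Rightarrow> 'a \<Rightarrow> bool) \<Rightarrow> ('a \<Rightarrow> 'a \<Rightarrow> bool) \<Rightarrow> bool" where
  "set_with_ineq X eq neq \<longleftrightarrow>
     (\<forall>x\<in>X. eq x x) \<and>
     (\<forall>x\<in>X. \<forall>y\<in>X. eq x y \<longrightarrow> eq y x) \<and>
     (\<forall>x\<in>X. \<forall>y\<in>X. \<forall>z\<in>X. eq x y \<longrightarrow> eq y z \<longrightarrow> eq x z) \<and>
     (\<forall>x\<in>X. \<forall>y\<in>X. eq x y \<longrightarrow> neq x y \<longrightarrow> False)"

definition neq_real :: "real \<Rightarrow> real \<Rightarrow> bool" where
  "neq_real a b \<longleftrightarrow> \<bar>a - b\<bar> > 0"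

definition real_fun_on :: "'a set \<Rightarrow> ('a \<Rightarrow> 'a \<Rightarrow> bool) \<Rightarrow> ('a \<Rightarrow> real) \<Rightarrow> bool" where
  "real_fun_on X eq f \<longleftrightarrow> (\<forall>x\<in>X. \<forall>y\<in>X. eq x y \<longrightarrow> f x = f y)"

definition extensional_subset :: "'a set \<Rightarrow> ('a \<Rightarrow> 'a \<Rightarrow> bool) \<Rightarrow> ('a \<Rightarrow> real) set \<Rightarrow> bool" where
  "extensional_subset X eq F \<longleftrightarrow>
     (\<forall>f\<in>F. real_fun_on X eq f) \<and>
     (\<forall>f\<in>F. \<forall>g. real_fun_on X eq g \<and> (\<forall>x\<in>X. g x = f x) \<longrightarrow> g \<in> F)"

definition induced_eq :: "('a \<Rightarrow> real) set \<Rightarrow> 'a \<Rightarrow> 'a \<Rightarrow> bool" where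
  "induced_eq F x x' \<longleftrightarrow> (\<forall>f\<in>F. f x = f x')"

definition induced_neq :: "('a \<Rightarrow> real) set \<Rightarrow> 'a \<Rightarrow> 'a \<Rightarrow> bool" where
  "induced_neq F x x' \<longleftrightarrow> (\<exists>f\<in>F. neq_real (f x) (f x'))"

definition completely_separated ::
  "'a set \<Rightarrow> ('a \<Rightarrow> 'a \<Rightarrow> bool) \<Rightarrow> ('a \<Rightarrow> 'a \<Rightarrow> bool) \<Rightarrow> ('a \<Rightarrow> real) set \<Rightarrow> bool" where
  "completely_separated X eq neq F \<longleftrightarrow>
     set_with_ineq X eq neq \<and> extensional_subset X eq F \<and>
     (\<forall>x\<in>X. \<forall>x'\<in>X. neq x x' \<longleftrightarrow> induced_neq F x x') \<and>
     (\<forall>x\<in>X. \<forall>x'\<in>X. induced_eq F x x' \<longrightarrow> eq x x')"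

definition family_with_ineq ::
  "'i set \<Rightarrow> ('i \<Rightarrow> 'i \<Rightarrow> bool) \<Rightarrow> ('i \<Rightarrow> 'a set) \<Rightarrow> ('i \<Rightarrow> 'a \<Rightarrow> 'a \<Rightarrow> bool)
    \<Rightarrow> ('i \<Rightarrow> 'a \<Rightarrow> 'a \<Rightarrow> bool) \<Rightarrow> ('i \<Rightarrow> 'i \<Rightarrow> 'a \<Rightarrow> 'a) \<Rightarrow> bool" where
  "family_with_ineq I eqI lam0 eqs neqs lam1 \<longleftrightarrow>
     (\<forall>i\<in>I. set_with_ineq (lam0 i) (eqs i) (neqs i)) \<and>
     (\<forall>i\<in>I. \<forall>j\<in>I. eqI i j \<longrightarrow>
        (\<forall>x\<in>lam0 i. lam1 i j x \<in> lam0 j) \<and>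
        (\<forall>x\<in>lam0 i. \<forall>y\<in>lam0 i. eqs i x y \<longrightarrow> eqs j (lam1 i j x) (lam1 i j y)) \<and>
        (\<forall>x\<in>lam0 i. \<forall>y\<in>lam0 i. neqs j (lam1 i j x) (lam1 i j y) \<longrightarrow> neqs i x y)) \<and>
     (\<forall>i\<in>I. \<forall>x\<in>lam0 i. eqs i (lam1 i i x) x) \<and>
     (\<forall>i\<in>I. \<forall>j\<in>I. \<forall>k\<in>I. eqI i j \<longrightarrow> eqI j k \<longrightarrow>
        (\<forall>x\<in>lam0 i. eqs k (lam1 j k (lam1 i j x)) (lam1 i k x)))"

definition family_compl_sep ::
  "'i set \<Rightarrow> ('i \<Rightarrow> 'i \<Rightarrow> bool) \<Rightarrow> ('i \<Rightarrow> 'a set) \<Rightarrow> ('i \<Rightarrow> 'a \<Rightarrow> 'a \<Rightarrow> bool)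
    \<Rightarrow> ('i \<Rightarrow> 'a \<Rightarrow> 'a \<Rightarrow> bool) \<Rightarrow> ('i \<Rightarrow> 'i \<Rightarrow> 'a \<Rightarrow> 'a)
    \<Rightarrow> ('i \<Rightarrow> ('a \<Rightarrow> real) set) \<Rightarrow> ('i \<Rightarrow> 'i \<Rightarrow> ('a \<Rightarrow> real) \<Rightarrow> ('a \<Rightarrow> real)) \<Rightarrow> bool" where
  "family_compl_sep I eqI lam0 eqs neqs lam1 F phi \<longleftrightarrow>
     family_with_ineq I eqI lam0 eqs neqs lam1 \<and>
     (\<forall>i\<in>I. extensional_subset (lam0 i) (eqs i) (F i)) \<and>
     (\<forall>i\<in>I. \<forall>j\<in>I. eqI i j \<longrightarrow> (\<forall>f\<in>F i. phi i j f \<in> F j)) \<and>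
     (\<forall>i\<in>I. \<forall>x\<in>lam0 i. \<forall>x'\<in>lam0 i. neqs i x x' \<longleftrightarrow> induced_neq (F i) x x') \<and>
     (\<forall>i\<in>I. \<forall>x\<in>lam0 i. \<forall>x'\<in>lam0 i. induced_eq (F i) x x' \<longrightarrow> eqs i x x') \<and>
     (\<forall>i\<in>I. \<forall>j\<in>I. eqI i j \<longrightarrow>
        (\<forall>f\<in>F i. \<forall>y\<in>lam0 j. phi i j f y = f (lam1 j i y)))"

definition pi_set ::
  "'i set \<Rightarrow> ('i \<Rightarrow> 'i \<Rightarrow> bool) \<Rightarrow> ('i \<Rightarrow> 'a set) \<Rightarrow> ('i \<Rightarrow> 'a \<Rightarrow> 'a \<Rightarrow> bool)
    \<Rightarrow> ('i \<Rightarrow> 'i \<Rightarrow> 'a \<Rightarrow> 'a) \<Rightarrow> ('i \<Rightarrow> 'a) set" where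
  "pi_set I eqI lam0 eqs lam1 =
     {\<Theta>. (\<forall>i\<in>I. \<Theta> i \<in> lam0 i) \<and>
          (\<forall>i\<in>I. \<forall>j\<in>I. eqI i j \<longrightarrow> eqs j (\<Theta> j) (lam1 i j (\<Theta> i)))}"

definition pi_eq :: "'i set \<Rightarrow> ('i \<Rightarrow> 'a \<Rightarrow> 'a \<Rightarrow> bool) \<Rightarrow> ('i \<Rightarrow> 'a) \<Rightarrow> ('i \<Rightarrow> 'a) \<Rightarrow> bool" where
  "pi_eq I eqs \<Theta> \<Theta>' \<longleftrightarrow> (\<forall>i\<in>I. eqs i (\<Theta> i) (\<Theta>' i))"

definition pi_neq :: "'i set \<Rightarrow> ('i \<Rightarrow> 'a \<Rightarrow> 'a \<Rightarrow> bool) \<Rightarrow> ('i \<Rightarrow> 'a) \<Rightarrow> ('i \<Rightarrow> 'a) \<Rightarrow> bool" where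
  "pi_neq I neqs \<Theta> \<Theta>' \<longleftrightarrow> (\<exists>i\<in>I. neqs i (\<Theta> i) (\<Theta>' i))"

text \<open>The tensor of the F_i: functions on the Pi-set that equal f_i o pr_i
 (pointwise on the Pi-set) for some i in I and f_i in F_i.\<close>
definition tensor_funs ::
  "'i set \<Rightarrow> ('i \<Rightarrow> 'i \<Rightarrow> bool) \<Rightarrow> ('i \<Rightarrow> 'a set) \<Rightarrow> ('i \<Rightarrow> 'a \<Rightarrow> 'a \<Rightarrow> bool)
    \<Rightarrow> ('i \<Rightarrow> 'i \<Rightarrow> 'a \<Rightarrow> 'a) \<Rightarrow> ('i \<Rightarrow> ('a \<Rightarrow> real) set) \<Rightarrow> (('i \<Rightarrow> 'a) \<Rightarrow> real) set" where
  "tensor_funs I eqI lam0 eqs lam1 F =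
     {g. \<exists>i\<in>I. \<exists>f\<in>F i. \<forall>\<Theta>\<in>pi_set I eqI lam0 eqs lam1. g \<Theta> = f (\<Theta> i)}"

end

theory Submission
  imports Defs
begin

theorem proposition4p5:
  fixes I :: "'i set" and eqI neqI :: "'i \<Rightarrow> 'i \<Rightarrow> bool" and K :: "('i \<Rightarrow> real) set"
    and lam0 :: "'i \<Rightarrow> 'a set" and eqs neqs :: "'i \<Rightarrow> 'a \<Rightarrow> 'a \<Rightarrow> bool"
    and lam1 :: "'i \<Rightarrow> 'i \<Rightarrow> 'a \<Rightarrow> 'a"
    and F :: "'i \<Rightarrow> ('a \<Rightarrow> real) set"
    and phi :: "'i \<Rightarrow> 'i \<Rightarrow> ('a \<Rightarrow> real) \<Rightarrow> ('a \<Rightarrow> real)"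
  assumes "completely_separated I eqI neqI K"
    and "family_compl_sep I eqI lam0 eqs neqs lam1 F phi"
  shows "completely_separated (pi_set I eqI lam0 eqs lam1) (pi_eq I eqs) (pi_neq I neqs)
           (tensor_funs I eqI lam0 eqs lam1 F)"
proof -
  let ?P = "pi_set I eqI lam0 eqs lam1"
  let ?T = "tensor_funs I eqI lam0 eqs lam1 F"
  have fam: "family_with_ineq I eqI lam0 eqs neqs lam1" using assms(2) by (simp add: family_compl_sep_def)
  have sw: "\<And>i. i \<in> I \<Longrightarrow> set_with_ineq (lam0 i) (eqs i) (neqs i)" using fam by (simp add: family_with_ineq_def)
  have ext: "\<And>i. i \<in> I \<Longrightarrow> extensional_subset (lam0 i) (eqs i) (F i)" using assms(2) by (simp add: family_compl_sep_def)
  have nq: "\<And>i x x'. i \<in> I \<Longrightarrow> x \<in> lam0 i \<Longrightarrow> x' \<in> lam0 i \<Longrightarrow> neqs i x x' \<longleftrightarrow> induced_neq (F i) x x'"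
    using assms(2) by (simp add: family_compl_sep_def)
  have eqd: "\<And>i x x'. i \<in> I \<Longrightarrow> x \<in> lam0 i \<Longrightarrow> x' \<in> lam0 i \<Longrightarrow> induced_eq (F i) x x' \<Longrightarrow> eqs i x x'"
    using assms(2) by (simp add: family_compl_sep_def)
  have rfl: "\<And>i x. i \<in> I \<Longrightarrow> x \<in> lam0 i \<Longrightarrow> eqs i x x" using sw unfolding set_with_ineq_def by metis
  have sym: "\<And>i x y. i \<in> I \<Longrightarrow> x \<in> lam0 i \<Longrightarrow> y \<in> lam0 i \<Longrightarrow> eqs i x y \<Longrightarrow> eqs i y x" using sw unfolding set_with_ineq_def by metis
  have trn: "\<And>i x y z. i \<in> I \<Longrightarrow> x \<in> lam0 i \<Longrightarrow> y \<in> lam0 i \<Longrightarrow> z \<in> lam0 i \<Longrightarrow> eqs i x y \<Longrightarrow> eqs i y z \<Longrightarrow> eqs i x z" using sw unfolding set_with_ineq_def by metis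
  have dis: "\<And>i x y. i \<in> I \<Longrightarrow> x \<in> lam0 i \<Longrightarrow> y \<in> lam0 i \<Longrightarrow> eqs i x y \<Longrightarrow> neqs i x y \<Longrightarrow> False" using sw unfolding set_with_ineq_def by metis
  have mem: "\<And>\<Theta> i. \<Theta> \<in> ?P \<Longrightarrow> i \<in> I \<Longrightarrow> \<Theta> i \<in> lam0 i" by (simp add: pi_set_def)
  have inT: "\<And>i f. i \<in> I \<Longrightarrow> f \<in> F i \<Longrightarrow> (\<lambda>\<Theta>. f (\<Theta> i)) \<in> ?T"
    unfolding tensor_funs_def by blast
  have A: "set_with_ineq ?P (pi_eq I eqs) (pi_neq I neqs)"
    unfolding set_with_ineq_def pi_eq_def pi_neq_def
  proof (intro conjI)
    show "\<forall>x\<in>?P. \<forall>i\<in>I. eqs i (x i) (x i)"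
    proof (intro ballI)
      fix x i assume x: "x \<in> ?P" and i: "i \<in> I"
      show "eqs i (x i) (x i)" using rfl[OF i mem[OF x i]] .
    qed
    show "\<forall>x\<in>?P. \<forall>y\<in>?P. (\<forall>i\<in>I. eqs i (x i) (y i)) \<longrightarrow> (\<forall>i\<in>I. eqs i (y i) (x i))"
    proof (intro ballI impI)
      fix x y i assume x: "x \<in> ?P" and y: "y \<in> ?P" and h: "\<forall>i\<in>I. eqs i (x i) (y i)" and i: "i \<in> I"
      show "eqs i (y i) (x i)" using sym[OF i mem[OF x i] mem[OF y i]] h i by blast
    qed
    show "\<forall>x\<in>?P. \<forall>y\<in>?P. \<forall>z\<in>?P. (\<forall>i\<in>I. eqs i (x i) (y i)) \<longrightarrow> (\<forall>i\<in>I. eqs i (y i) (z i)) \<longrightarrow> (\<forall>i\<in>I. eqs i (x i) (z i))"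
    proof (intro ballI impI)
      fix x y z i assume x: "x \<in> ?P" and y: "y \<in> ?P" and z: "z \<in> ?P"
        and h: "\<forall>i\<in>I. eqs i (x i) (y i)" and h2: "\<forall>i\<in>I. eqs i (y i) (z i)" and i: "i \<in> I"
      show "eqs i (x i) (z i)" using trn[OF i mem[OF x i] mem[OF y i] mem[OF z i]] h h2 i by blast
    qed
    show "\<forall>x\<in>?P. \<forall>y\<in>?P. (\<forall>i\<in>I. eqs i (x i) (y i)) \<longrightarrow> (\<exists>i\<in>I. neqs i (x i) (y i)) \<longrightarrow> False"
    proof (intro ballI impI)
      fix x y assume x: "x \<in> ?P" and y: "y \<in> ?P" and h: "\<forall>i\<in>I. eqs i (x i) (y i)"
        and h2: "\<exists>i\<in>I. neqs i (x i) (y i)"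
      then obtain i where i: "i \<in> I" "neqs i (x i) (y i)" by blast
      show False using dis[OF i(1) mem[OF x i(1)] mem[OF y i(1)]] h i by blast
    qed
  qed
  have B: "extensional_subset ?P (pi_eq I eqs) ?T"
    unfolding extensional_subset_def
  proof (intro conjI ballI allI impI)
    fix g assume g: "g \<in> ?T"
    then obtain i f where i: "i \<in> I" and f: "f \<in> F i" and gf: "\<forall>\<Theta>\<in>?P. g \<Theta> = f (\<Theta> i)"
      unfolding tensor_funs_def by blast
    have rf: "real_fun_on (lam0 i) (eqs i) f" using ext[OF i] f unfolding extensional_subset_def by blast
    show "real_fun_on ?P (pi_eq I eqs) g"
      unfolding real_fun_on_def
    proof (intro ballI impI)
      fix x y assume x: "x \<in> ?P" and y: "y \<in> ?P" and e: "pi_eq I eqs x y"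
      have "eqs i (x i) (y i)" using e i by (simp add: pi_eq_def)
      then show "g x = g y" using gf x y rf mem[OF x i] mem[OF y i] unfolding real_fun_on_def by simp
    qed
  next
    fix f g assume g: "f \<in> ?T" and h: "real_fun_on ?P (pi_eq I eqs) g \<and> (\<forall>x\<in>?P. g x = f x)"
    then show "g \<in> ?T" unfolding tensor_funs_def by auto
  qed
  have C: "\<forall>x\<in>?P. \<forall>x'\<in>?P. pi_neq I neqs x x' \<longleftrightarrow> induced_neq ?T x x'"
  proof (intro ballI iffI)
    fix x x' assume x: "x \<in> ?P" and x': "x' \<in> ?P" and n: "pi_neq I neqs x x'"
    then obtain i where i: "i \<in> I" "neqs i (x i) (x' i)" by (auto simp: pi_neq_def)
    then obtain f where f: "f \<in> F i" "neq_real (f (x i)) (f (x' i))"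
      using nq[OF i(1) mem[OF x i(1)] mem[OF x' i(1)]] by (auto simp: induced_neq_def)
    show "induced_neq ?T x x'" unfolding induced_neq_def
      using inT[OF i(1) f(1)] f(2) by force
  next
    fix x x' assume x: "x \<in> ?P" and x': "x' \<in> ?P" and n: "induced_neq ?T x x'"
    then obtain g where g: "g \<in> ?T" "neq_real (g x) (g x')" by (auto simp: induced_neq_def)
    then obtain i f where i: "i \<in> I" and f: "f \<in> F i" and gf: "\<forall>\<Theta>\<in>?P. g \<Theta> = f (\<Theta> i)"
      unfolding tensor_funs_def by blast
    have "induced_neq (F i) (x i) (x' i)" unfolding induced_neq_def
      using f g(2) gf x x' by auto
    then have "neqs i (x i) (x' i)" using nq[OF i mem[OF x i] mem[OF x' i]] by simp
    then show "pi_neq I neqs x x'" using i by (auto simp: pi_neq_def)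
  qed
  have D: "\<forall>x\<in>?P. \<forall>x'\<in>?P. induced_eq ?T x x' \<longrightarrow> pi_eq I eqs x x'"
  proof (intro ballI impI)
    fix x x' assume x: "x \<in> ?P" and x': "x' \<in> ?P" and e: "induced_eq ?T x x'"
    show "pi_eq I eqs x x'" unfolding pi_eq_def
    proof
      fix i assume i: "i \<in> I"
      have "induced_eq (F i) (x i) (x' i)" unfolding induced_eq_def
      proof
        fix f assume f: "f \<in> F i"
        show "f (x i) = f (x' i)" using e inT[OF i f] unfolding induced_eq_def by force
      qed
      then show "eqs i (x i) (x' i)" using eqd[OF i mem[OF x i] mem[OF x' i]] by simp
    qed
  qed
  show ?thesis unfolding completely_separated_def using A B C D by blast
qed

end
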